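(* Let $A>0$, $\alpha>0$, $k\ge2$, and define \[ \Lambda^{(k,1)}(A,\alpha):=\inf_{a\ge1}\Big[\lambda_k(I_{A^{1/2}a},\alpha)+\lambda_1(I_{A^{1/2}/a},\alpha)\Big]. \] Then \[ \frac{3\pi^2\alpha^{2/3}}{(\pi^2+2A^{1/2}\alpha)^{2/3}A^{2/3}}(k-2)^{2/3}\le\Lambda^{(k,1)}(A,\alpha), \] and, provided $\alpha\le\pi^2A^{-1/2}k^2$, \[ \Lambda^{(k,1)}(A,\alpha)\le3\Big(\frac{\pi\alpha}{A}\Big)^{2/3}k^{2/3}. \] Moreover the infimum is attained, and (for fixed $A,\alpha$) there are constants $0<c\le c'$ such that for all sufficiently large $k$ it is attained at some $a_k\ge1$ with $ck^{2/3}\le a_k\le c'k^{2/3}$. Finally, \[ \lim_{k\to\infty}\frac{\Lambda^{(k,1)}(A,\alpha)}{k^{2/3}}=3\Big(\frac{\pi\alpha}{A}\Big)^{2/3}. \]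
   Context: For an interval $I_b\subset\mathbb{R}$ of length $b>0$ and $\alpha>0$, $\lambda_1(I_b,\alpha)<\lambda_2(I_b,\alpha)<\cdots$ denote the eigenvalues of the Robin problem $-u''=\lambda u$ on $I_b$, $\partial_\nu u+\alpha u=0$ at both endpoints ($\partial_\nu$ the outward derivative). *)

theory Defs
  imports Complex_Main
begin

definition robin_eigenvalue :: "real \<Rightarrow> real \<Rightarrow> real \<Rightarrow> bool" where
  "robin_eigenvalue b \<alpha> lam \<longleftrightarrow>
     (\<exists>u u'. (\<forall>x\<in>{0..b}. (u has_real_derivative u' x) (at x within {0..b}) \<and>
                          (u' has_real_derivative (- lam * u x)) (at x within {0..b}))
            \<and> (\<exists>x\<in>{0..b}. u x \<noteq> 0)
            \<and> - u' 0 + \<alpha> * u 0 = 0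
            \<and> u' b + \<alpha> * u b = 0)"

text \<open>lambda_k(I_b, alpha): the k-th eigenvalue (k >= 1) in increasing order
  (the eigenvalues are simple), i.e. the eigenvalue with exactly k-1 eigenvalues below it.\<close>
definition robin_ev :: "nat \<Rightarrow> real \<Rightarrow> real \<Rightarrow> real" where
  "robin_ev k b \<alpha> = (THE lam. robin_eigenvalue b \<alpha> lam \<and>
       card {\<mu>. robin_eigenvalue b \<alpha> \<mu> \<and> \<mu> < lam} = k - 1)"

definition robin_sum :: "nat \<Rightarrow> real \<Rightarrow> real \<Rightarrow> real \<Rightarrow> real" where
  "robin_sum k A \<alpha> a = robin_ev k (sqrt A * a) \<alpha> + robin_ev 1 (sqrt A / a) \<alpha>"

definition Lambda_k1 :: "nat \<Rightarrow> real \<Rightarrow> real \<Rightarrow> real" where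
  "Lambda_k1 k A \<alpha> = (INF a\<in>{1..}. robin_sum k A \<alpha> a)"

end

theory Submission
  imports Defs "HOL-Analysis.Analysis" "HOL-Real_Asymp.Real_Asymp"
begin



lemma robin_neg_trivial:
  fixes u u' :: "real \<Rightarrow> real" and b \<alpha> lam :: real
  assumes b: "b > 0" and al: "\<alpha> > 0" and lam: "lam \<le> 0"
    and D: "\<forall>x\<in>{0..b}. (u has_real_derivative u' x) (at x within {0..b}) \<and>
                          (u' has_real_derivative (- lam * u x)) (at x within {0..b})"
    and bc0: "- u' 0 + \<alpha> * u 0 = 0" and bcb: "u' b + \<alpha> * u b = 0"
  shows "\<forall>x\<in>{0..b}. u x = 0"
proof -
  define h where "h x = u x * u' x" for x
  have hd: "(h has_real_derivative (u' x * u' x + u x * (- lam * u x))) (at x within {0..b})"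
    if "x \<in> {0..b}" for x
    unfolding h_def using D that
    by (auto intro!: derivative_eq_intros)
  have hc: "continuous_on {0..b} h"
    using hd by (rule DERIV_continuous_on)
  have mono: "h x \<le> h y" if "0 \<le> x" "x \<le> y" "y \<le> b" for x y
  proof (rule DERIV_nonneg_imp_increasing_open[OF \<open>x \<le> y\<close>])
    fix z assume z: "x < z" "z < y"
    then have "z \<in> {0..b}" using that by auto
    from hd[OF this] have "(h has_real_derivative (u' z * u' z + u z * (- lam * u z))) (at z)"
      using z that by (simp add: at_within_Icc_at)
    moreover have "0 \<le> u' z * u' z + (- lam) * (u z * u z)"
      by (metis add_nonneg_nonneg lam mult_nonneg_nonneg neg_0_le_iff_le zero_le_square)
    then have "0 \<le> u' z * u' z + u z * (- lam * u z)" by (simp add: algebra_simps)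
    ultimately show "\<exists>y. (h has_real_derivative y) (at z) \<and> 0 \<le> y" by blast
  next
    show "continuous_on {x..y} h" using hc by (rule continuous_on_subset) (use that in auto)
  qed
  have h0: "h 0 = \<alpha> * (u 0)\<^sup>2" using bc0 by (simp add: h_def power2_eq_square)
  have "u' b = - \<alpha> * u b" using bcb by linarith
  then have hb: "h b = - \<alpha> * (u b)\<^sup>2" by (simp add: h_def power2_eq_square)
  have "h 0 \<le> h b" using mono[of 0 b] b by simp
  moreover have hb0: "h b \<le> 0" using hb al by simp
  ultimately have "\<alpha> * (u 0)\<^sup>2 \<le> 0" using h0 by linarith
  then have u0: "u 0 = 0" using al by (simp add: mult_le_0_iff)
  have hz: "h x = 0" if "x \<in> {0..b}" for x
  proof -
    have "h 0 = 0" using h0 u0 by simp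
    then show ?thesis using mono[of 0 x] mono[of x b] that hb0 by auto
  qed
  have sqd: "((\<lambda>x. (u x)\<^sup>2) has_real_derivative 0) (at x within {0..b})" if "x \<in> {0..b}" for x
  proof -
    have "((\<lambda>x. (u x)\<^sup>2) has_real_derivative (2 * u x * u' x)) (at x within {0..b})"
      using D that by (auto intro!: derivative_eq_intros)
    moreover have "2 * u x * u' x = 0" using hz[OF that] by (simp add: h_def)
    ultimately show ?thesis by simp
  qed
  obtain c where c: "\<forall>x\<in>{0..b}. (u x)\<^sup>2 = c"
    using has_field_derivative_zero_constant[OF convex_real_interval(5) sqd] by blast
  then have "c = 0" using u0 b by force
  then show ?thesis using c by simp
qed



lemma robin_pos_repr:
  fixes u u' :: "real \<Rightarrow> real" and b lam :: real
  assumes lam: "lam > 0" 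
    and D: "\<forall>x\<in>{0..b}. (u has_real_derivative u' x) (at x within {0..b}) \<and>
                          (u' has_real_derivative (- lam * u x)) (at x within {0..b})"
    and b: "b \<ge> 0"
  shows "\<forall>x\<in>{0..b}. u x = u 0 * cos (sqrt lam * x) + (u' 0 / sqrt lam) * sin (sqrt lam * x)
              \<and> u' x = - u 0 * sqrt lam * sin (sqrt lam * x) + u' 0 * cos (sqrt lam * x)"
proof -
  define \<mu> where "\<mu> = sqrt lam"
  have mu: "\<mu> > 0" "\<mu> * \<mu> = lam" using lam by (auto simp: \<mu>_def)
  define w where "w x = u x - u 0 * cos (\<mu> * x) - (u' 0 / \<mu>) * sin (\<mu> * x)" for x
  define w' where "w' x = u' x + u 0 * \<mu> * sin (\<mu> * x) - u' 0 * cos (\<mu> * x)" for x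
  have wd: "(w has_real_derivative w' x) (at x within {0..b})" if "x \<in> {0..b}" for x
    unfolding w_def w'_def using D that mu
    by (auto intro!: derivative_eq_intros simp: field_simps)
  have w'd: "(w' has_real_derivative (- lam * w x)) (at x within {0..b})" if "x \<in> {0..b}" for x
    unfolding w_def w'_def using D that mu
    by (auto intro!: derivative_eq_intros simp: field_simps)
  have Ed: "((\<lambda>x. (w' x)\<^sup>2 + lam * (w x)\<^sup>2) has_real_derivative 0) (at x within {0..b})"
    if "x \<in> {0..b}" for x
    using wd[OF that] w'd[OF that]
    by (auto intro!: derivative_eq_intros simp: algebra_simps)
  obtain c where c: "\<forall>x\<in>{0..b}. (w' x)\<^sup>2 + lam * (w x)\<^sup>2 = c"
    using has_field_derivative_zero_constant[OF convex_real_interval(5) Ed] by blast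
  have "c = 0" using c[rule_format, of 0] b by (simp add: w_def w'_def)
  then have z: "w x = 0 \<and> w' x = 0" if "x \<in> {0..b}" for x
  proof -
    have h: "(w' x)\<^sup>2 + lam * (w x)\<^sup>2 = 0" using c[rule_format, OF that] \<open>c = 0\<close> by simp
    have "(w' x)\<^sup>2 = 0 \<and> lam * (w x)\<^sup>2 = 0"
      using add_nonneg_eq_0_iff[of "(w' x)\<^sup>2" "lam * (w x)\<^sup>2"] h lam by simp
    then show ?thesis using lam by simp
  qed
  show ?thesis
  proof
    fix x assume x: "x \<in> {0..b}"
    show "u x = u 0 * cos (sqrt lam * x) + (u' 0 / sqrt lam) * sin (sqrt lam * x)
              \<and> u' x = - u 0 * sqrt lam * sin (sqrt lam * x) + u' 0 * cos (sqrt lam * x)"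
      using z[OF x] unfolding w_def w'_def \<mu>_def by auto
  qed
qed



lemma aux_div: "(d::real) > 0 \<Longrightarrow> M * d * (S * (P / d) - C * (Q / d)) = M * (S * P - C * Q)"
  by (simp add: field_simps)

lemma trig_char:
  fixes \<mu> \<alpha> b :: real
  assumes mu: "\<mu> > 0"
  shows "(\<alpha>\<^sup>2 - \<mu>\<^sup>2) * sin (\<mu> * b) + 2 * \<alpha> * \<mu> * cos (\<mu> * b)
         = - (\<alpha>\<^sup>2 + \<mu>\<^sup>2) * sin (\<mu> * b - 2 * arctan (\<alpha> / \<mu>))"
proof -
  define t where "t = \<alpha> / \<mu>"
  have s: "sin (2 * arctan t) = 2 * t / (1 + t\<^sup>2)"
    by (simp add: sin_double sin_arctan cos_arctan power2_eq_square)
  have c: "cos (2 * arctan t) = (1 - t\<^sup>2) / (1 + t\<^sup>2)"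
    by (simp add: cos_double sin_arctan cos_arctan power_divide diff_divide_distrib)
  have pos: "1 + t\<^sup>2 > 0" by (simp add: add_pos_nonneg)
  have e: "(\<alpha>\<^sup>2 + \<mu>\<^sup>2) = \<mu>\<^sup>2 * (1 + t\<^sup>2)" using mu by (simp add: t_def field_simps)
  have "- (\<alpha>\<^sup>2 + \<mu>\<^sup>2) * sin (\<mu> * b - 2 * arctan t)
        = - \<mu>\<^sup>2 * (1 + t\<^sup>2) * (sin (\<mu> * b) * ((1 - t\<^sup>2) / (1 + t\<^sup>2)) - cos (\<mu> * b) * (2 * t / (1 + t\<^sup>2)))"
    by (simp add: e sin_diff s c)
  also have "\<dots> = - \<mu>\<^sup>2 * (sin (\<mu> * b) * (1 - t\<^sup>2) - cos (\<mu> * b) * (2 * t))"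
    by (rule aux_div[OF pos])
  also have "\<dots> = (\<alpha>\<^sup>2 - \<mu>\<^sup>2) * sin (\<mu> * b) + 2 * \<alpha> * \<mu> * cos (\<mu> * b)"
    using mu by (simp add: t_def field_simps power2_eq_square)
  finally show ?thesis by (simp add: t_def)
qed




lemma robin_eig_iff:
  fixes b \<alpha> lam :: real
  assumes b: "b > 0" and al: "\<alpha> > 0"
  shows "robin_eigenvalue b \<alpha> lam \<longleftrightarrow>
         lam > 0 \<and> (\<exists>n::nat. sqrt lam * b - 2 * arctan (\<alpha> / sqrt lam) = real n * pi)"
proof
  assume "robin_eigenvalue b \<alpha> lam"
  then obtain u u' where D: "\<forall>x\<in>{0..b}. (u has_real_derivative u' x) (at x within {0..b}) \<and>
                          (u' has_real_derivative (- lam * u x)) (at x within {0..b})"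
      and nz: "\<exists>x\<in>{0..b}. u x \<noteq> 0" and bc0: "- u' 0 + \<alpha> * u 0 = 0" and bcb: "u' b + \<alpha> * u b = 0"
    unfolding robin_eigenvalue_def by blast
  have lam: "lam > 0"
  proof (rule ccontr)
    assume "\<not> lam > 0"
    then have "\<forall>x\<in>{0..b}. u x = 0" using robin_neg_trivial[OF b al _ D bc0 bcb] by simp
    then show False using nz by blast
  qed
  define \<mu> where "\<mu> = sqrt lam"
  have mu: "\<mu> > 0" using lam by (simp add: \<mu>_def)
  have R: "\<forall>x\<in>{0..b}. u x = u 0 * cos (\<mu> * x) + (u' 0 / \<mu>) * sin (\<mu> * x)
              \<and> u' x = - u 0 * \<mu> * sin (\<mu> * x) + u' 0 * cos (\<mu> * x)"
    unfolding \<mu>_def by (rule robin_pos_repr[OF lam D less_imp_le[OF b]])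
  have u'0: "u' 0 = \<alpha> * u 0" using bc0 by simp
  have u0: "u 0 \<noteq> 0"
  proof
    assume "u 0 = 0"
    have "\<forall>x\<in>{0..b}. u x = 0"
    proof
      fix x assume "x \<in> {0..b}"
      then have "u x = u 0 * cos (\<mu> * x) + (u' 0 / \<mu>) * sin (\<mu> * x)" using R by blast
      then show "u x = 0" using \<open>u 0 = 0\<close> u'0 by simp
    qed
    then show False using nz by blast
  qed
  have "u' b + \<alpha> * u b = u 0 * (- \<mu> * sin (\<mu> * b) + \<alpha> * cos (\<mu> * b) + \<alpha> * cos (\<mu> * b) + \<alpha> * (\<alpha> / \<mu>) * sin (\<mu> * b))"
  proof -
    have bb: "b \<in> {0..b}" using b by simp
    have "u b = u 0 * cos (\<mu> * b) + (u' 0 / \<mu>) * sin (\<mu> * b) \<and>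
         u' b = - u 0 * \<mu> * sin (\<mu> * b) + u' 0 * cos (\<mu> * b)" using R bb by blast
    then show ?thesis using u'0 by (simp add: algebra_simps)
  qed
  also have "\<dots> = u 0 / \<mu> * ((\<alpha>\<^sup>2 - \<mu>\<^sup>2) * sin (\<mu> * b) + 2 * \<alpha> * \<mu> * cos (\<mu> * b))"
    using mu by (simp add: field_simps power2_eq_square)
  also have "\<dots> = - u 0 / \<mu> * (\<alpha>\<^sup>2 + \<mu>\<^sup>2) * sin (\<mu> * b - 2 * arctan (\<alpha> / \<mu>))"
    unfolding trig_char[OF mu] by (simp add: algebra_simps)
  finally have "sin (\<mu> * b - 2 * arctan (\<alpha> / \<mu>)) = 0"
    using bcb u0 mu al by (simp add: add_pos_pos)
  then obtain i :: int where i: "\<mu> * b - 2 * arctan (\<alpha> / \<mu>) = real_of_int i * pi"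
    using sin_zero_iff_int2 by blast
  have "arctan (\<alpha> / \<mu>) < pi / 2" by (rule arctan_ubound)
  moreover have "\<mu> * b > 0" using mu b by simp
  ultimately have "real_of_int i * pi > - pi" using i by linarith
  then have "(-1) * pi < real_of_int i * pi" by simp
  then have "real_of_int i > -1" using mult_less_cancel_right_pos[OF pi_gt_zero] by blast
  then have "i \<ge> 0" by linarith
  then have "\<mu> * b - 2 * arctan (\<alpha> / \<mu>) = real (nat i) * pi" using i by simp
  then show "lam > 0 \<and> (\<exists>n::nat. sqrt lam * b - 2 * arctan (\<alpha> / sqrt lam) = real n * pi)"
    using lam unfolding \<mu>_def by blast
next
  assume "lam > 0 \<and> (\<exists>n::nat. sqrt lam * b - 2 * arctan (\<alpha> / sqrt lam) = real n * pi)"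
  then obtain n :: nat where lam: "lam > 0" and n: "sqrt lam * b - 2 * arctan (\<alpha> / sqrt lam) = real n * pi"
    by blast
  define \<mu> where "\<mu> = sqrt lam"
  have mu: "\<mu> > 0" "\<mu> * \<mu> = lam" using lam by (auto simp: \<mu>_def)
  define u where "u x = cos (\<mu> * x) + (\<alpha> / \<mu>) * sin (\<mu> * x)" for x
  define u' where "u' x = - \<mu> * sin (\<mu> * x) + \<alpha> * cos (\<mu> * x)" for x
  have D: "\<forall>x\<in>{0..b}. (u has_real_derivative u' x) (at x within {0..b}) \<and>
                          (u' has_real_derivative (- lam * u x)) (at x within {0..b})"
  proof
    fix x assume x: "x \<in> {0..b}"
    have 1: "(u has_real_derivative u' x) (at x within {0..b})"
      unfolding u_def u'_def
      by (rule derivative_eq_intros refl)+ (use mu in simp)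
    have 2: "(u' has_real_derivative (- lam * u x)) (at x within {0..b})"
      unfolding u_def u'_def mu(2)[symmetric]
      by (rule derivative_eq_intros refl)+ (use mu(1) in \<open>simp add: field_simps\<close>)
    show "(u has_real_derivative u' x) (at x within {0..b}) \<and>
          (u' has_real_derivative (- lam * u x)) (at x within {0..b})" using 1 2 by blast
  qed
  have nz: "\<exists>x\<in>{0..b}. u x \<noteq> 0" using b by (intro bexI[of _ 0]) (auto simp: u_def)
  have bc0: "- u' 0 + \<alpha> * u 0 = 0" by (simp add: u_def u'_def)
  have "u' b + \<alpha> * u b = 1 / \<mu> * ((\<alpha>\<^sup>2 - \<mu>\<^sup>2) * sin (\<mu> * b) + 2 * \<alpha> * \<mu> * cos (\<mu> * b))"
    using mu by (simp add: u_def u'_def field_simps power2_eq_square)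
  also have "\<dots> = - 1 / \<mu> * (\<alpha>\<^sup>2 + \<mu>\<^sup>2) * sin (\<mu> * b - 2 * arctan (\<alpha> / \<mu>))"
    unfolding trig_char[OF mu(1)] by (simp add: algebra_simps)
  also have "\<dots> = 0" using n unfolding \<mu>_def by (simp add: mult.commute)
  finally have bcb: "u' b + \<alpha> * u b = 0" .
  show "robin_eigenvalue b \<alpha> lam"
    unfolding robin_eigenvalue_def using D nz bc0 bcb by blast
qed




definition G :: "real \<Rightarrow> real \<Rightarrow> real \<Rightarrow> real" where
  "G b \<alpha> \<mu> = \<mu> * b - 2 * arctan (\<alpha> / \<mu>)"

definition rmu :: "nat \<Rightarrow> real \<Rightarrow> real \<Rightarrow> real" where
  "rmu n b \<alpha> = (THE \<mu>. \<mu> > 0 \<and> G b \<alpha> \<mu> = real n * pi)"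

lemma G_strict:
  assumes "b > 0" "\<alpha> > 0" "0 < x" "x < y"
  shows "G b \<alpha> x < G b \<alpha> y"
proof -
  have "x * b < y * b" using assms by simp
  moreover have "\<alpha> / y < \<alpha> / x" using assms by (simp add: divide_strict_left_mono)
  then have "arctan (\<alpha> / y) < arctan (\<alpha> / x)" by (simp add: arctan_less_iff)
  ultimately show ?thesis unfolding G_def by simp
qed

lemma G_cont: "x \<noteq> 0 \<Longrightarrow> isCont (G b \<alpha>) x"
  unfolding G_def by (intro continuous_intros) auto

lemma G_bounds:
  assumes "\<alpha> > 0" "\<mu> > 0"
  shows "\<mu> * b - pi < G b \<alpha> \<mu>" "G b \<alpha> \<mu> < \<mu> * b"
proof -
  have "0 < arctan (\<alpha> / \<mu>)" using assms by simp
  moreover have "arctan (\<alpha> / \<mu>) < pi / 2" by (rule arctan_ubound)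
  ultimately show "\<mu> * b - pi < G b \<alpha> \<mu>" "G b \<alpha> \<mu> < \<mu> * b" unfolding G_def by linarith+
qed

lemma rmu_exists:
  assumes b: "b > 0" and al: "\<alpha> > 0"
  shows "\<exists>\<mu>>0. G b \<alpha> \<mu> = real n * pi"
proof -
  define x0 where "x0 = min \<alpha> (1 / b)"
  define x1 where "x1 = (real n + 1) * pi / b"
  have x0: "x0 > 0" using b al by (simp add: x0_def)
  have "x0 \<le> 1 / b" by (simp add: x0_def)
  then have x0b: "x0 * b \<le> 1" using b by (simp add: field_simps)
  have "1 \<le> \<alpha> / x0" using x0 by (simp add: x0_def field_simps)
  then have "arctan 1 \<le> arctan (\<alpha> / x0)" by (rule arctan_monotone')
  then have "pi / 4 \<le> arctan (\<alpha> / x0)" by (simp only: arctan_one)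
  then have "G b \<alpha> x0 \<le> 1 - pi / 2" using x0b unfolding G_def by linarith
  also have "\<dots> \<le> real n * pi"
  proof -
    have "0 \<le> real n * pi" by simp
    then show ?thesis using pi_gt3 by linarith
  qed
  finally have g0: "G b \<alpha> x0 \<le> real n * pi" .
  have "x1 * b = (real n + 1) * pi" using b by (simp add: x1_def)
  moreover have x1pos: "x1 > 0" using b by (simp add: x1_def)
  moreover have "x1 * b - pi < G b \<alpha> x1" by (rule G_bounds(1)[OF al x1pos])
  ultimately have g1: "real n * pi \<le> G b \<alpha> x1" by (simp add: algebra_simps)
  have "x0 \<le> x1"
  proof -
    have "1 / b \<le> pi / b" using b pi_gt3 by (simp add: divide_right_mono)
    also have "\<dots> \<le> x1" unfolding x1_def using b
      by (simp add: divide_right_mono)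
    finally show ?thesis using \<open>x0 \<le> 1 / b\<close> by linarith
  qed
  obtain x where "x0 \<le> x" "x \<le> x1" "G b \<alpha> x = real n * pi"
    using IVT[of "G b \<alpha>" x0 "real n * pi" x1, OF g0 g1 \<open>x0 \<le> x1\<close>] x0 G_cont by force
  then show ?thesis using x0 by (intro exI[of _ x]) auto
qed

lemma rmu_unique:
  assumes b: "b > 0" and al: "\<alpha> > 0" and "\<mu> > 0" "G b \<alpha> \<mu> = real n * pi"
  shows "rmu n b \<alpha> = \<mu>"
  unfolding rmu_def
proof (rule the_equality)
  show "\<mu> > 0 \<and> G b \<alpha> \<mu> = real n * pi" using assms by simp
  fix y assume y: "y > 0 \<and> G b \<alpha> y = real n * pi"
  show "y = \<mu>"
  proof (rule ccontr)
    assume "y \<noteq> \<mu>"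
    then have "y < \<mu> \<or> \<mu> < y" by linarith
    then show False using G_strict[OF b al] y assms by fastforce
  qed
qed

lemma rmu_prop:
  assumes b: "b > 0" and al: "\<alpha> > 0"
  shows "rmu n b \<alpha> > 0" "G b \<alpha> (rmu n b \<alpha>) = real n * pi"
proof -
  obtain \<mu> where "\<mu> > 0" "G b \<alpha> \<mu> = real n * pi" using rmu_exists[OF b al] by blast
  moreover have "rmu n b \<alpha> = \<mu>" using rmu_unique[OF b al] calculation by blast
  ultimately show "rmu n b \<alpha> > 0" "G b \<alpha> (rmu n b \<alpha>) = real n * pi" by simp_all
qed

lemma rmu_eq: 
  assumes b: "b > 0" and al: "\<alpha> > 0"
  shows "rmu n b \<alpha> * b = real n * pi + 2 * arctan (\<alpha> / rmu n b \<alpha>)"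
  using rmu_prop(2)[OF b al, of n] unfolding G_def by linarith

lemma rmu_bounds:
  assumes b: "b > 0" and al: "\<alpha> > 0"
  shows "real n * pi < rmu n b \<alpha> * b" "rmu n b \<alpha> * b < (real n + 1) * pi"
  using G_bounds[OF al rmu_prop(1)[OF b al, of n], of b] rmu_prop(2)[OF b al, of n]
  by (simp_all add: algebra_simps)

lemma rmu_strict_mono:
  assumes b: "b > 0" and al: "\<alpha> > 0" and "n < m"
  shows "rmu n b \<alpha> < rmu m b \<alpha>"
proof (rule ccontr)
  assume "\<not> rmu n b \<alpha> < rmu m b \<alpha>"
  then have "rmu m b \<alpha> \<le> rmu n b \<alpha>" by simp
  then have "G b \<alpha> (rmu m b \<alpha>) \<le> G b \<alpha> (rmu n b \<alpha>)"
  proof (cases "rmu m b \<alpha> = rmu n b \<alpha>")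
    case False
    then have "rmu m b \<alpha> < rmu n b \<alpha>" using \<open>rmu m b \<alpha> \<le> rmu n b \<alpha>\<close> by simp
    then show ?thesis using G_strict[OF b al rmu_prop(1)[OF b al, of m], of "rmu n b \<alpha>"] by simp
  qed simp
  then have "real m * pi \<le> real n * pi" using rmu_prop(2)[OF b al] by simp
  then show False using \<open>n < m\<close> by simp
qed

lemma eig_iff2:
  assumes b: "b > 0" and al: "\<alpha> > 0"
  shows "robin_eigenvalue b \<alpha> lam \<longleftrightarrow> (\<exists>n. lam = (rmu n b \<alpha>)\<^sup>2)"
proof
  assume "robin_eigenvalue b \<alpha> lam"
  then have "lam > 0 \<and> (\<exists>n::nat. sqrt lam * b - 2 * arctan (\<alpha> / sqrt lam) = real n * pi)"
    by (simp only: robin_eig_iff[OF b al])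
  then obtain n where lam: "lam > 0" and n: "sqrt lam * b - 2 * arctan (\<alpha> / sqrt lam) = real n * pi"
    by blast
  have "G b \<alpha> (sqrt lam) = real n * pi" using n unfolding G_def .
  then have "rmu n b \<alpha> = sqrt lam" using rmu_unique[OF b al] lam by simp
  then show "\<exists>n. lam = (rmu n b \<alpha>)\<^sup>2" using lam by (intro exI[of _ n]) simp
next
  assume "\<exists>n. lam = (rmu n b \<alpha>)\<^sup>2"
  then obtain n where n: "lam = (rmu n b \<alpha>)\<^sup>2" by blast
  have p: "rmu n b \<alpha> > 0" using rmu_prop(1)[OF b al] .
  then have s: "sqrt lam = rmu n b \<alpha>" using n by simp
  have "sqrt lam * b - 2 * arctan (\<alpha> / sqrt lam) = real n * pi"
    using rmu_prop(2)[OF b al, of n] unfolding G_def s .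
  moreover have "lam > 0" using p n by simp
  ultimately show "robin_eigenvalue b \<alpha> lam" by (simp only: robin_eig_iff[OF b al]) blast
qed

lemma sq_less_iff: "0 < (x::real) \<Longrightarrow> 0 < y \<Longrightarrow> x\<^sup>2 < y\<^sup>2 \<longleftrightarrow> x < y"
  using power2_less_imp_less[of x y] power_strict_mono[of x y 2] by auto

lemma robin_ev_eq:
  assumes b: "b > 0" and al: "\<alpha> > 0" and k: "k \<ge> 1"
  shows "robin_ev k b \<alpha> = (rmu (k - 1) b \<alpha>)\<^sup>2"
proof -
  let ?f = "\<lambda>i. (rmu i b \<alpha>)\<^sup>2"
  have lt: "?f i < ?f j \<longleftrightarrow> i < j" for i j
  proof -
    have "?f i < ?f j \<longleftrightarrow> rmu i b \<alpha> < rmu j b \<alpha>"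
      using rmu_prop(1)[OF b al, of i] rmu_prop(1)[OF b al, of j] sq_less_iff by blast
    also have "\<dots> \<longleftrightarrow> i < j"
      using rmu_strict_mono[OF b al, of i j] rmu_strict_mono[OF b al, of j i]
      by (metis less_asym linorder_neqE_nat)
    finally show ?thesis .
  qed
  have inj: "inj ?f"
    by (rule injI) (metis lt linorder_neqE_nat less_irrefl)
  have S: "{\<nu>. robin_eigenvalue b \<alpha> \<nu> \<and> \<nu> < ?f j} = ?f ` {..<j}" for j
  proof (intro set_eqI iffI)
    fix \<nu> assume "\<nu> \<in> {\<nu>. robin_eigenvalue b \<alpha> \<nu> \<and> \<nu> < ?f j}"
    then obtain n where n: "\<nu> = ?f n" "?f n < ?f j" using eig_iff2[OF b al] by auto
    then have "n < j" using lt by blast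
    then show "\<nu> \<in> ?f ` {..<j}" using n by blast
  next
    fix \<nu> assume "\<nu> \<in> ?f ` {..<j}"
    then obtain n where n: "\<nu> = ?f n" "n < j" by blast
    then have "?f n < ?f j" using lt by blast
    moreover have "robin_eigenvalue b \<alpha> (?f n)" using eig_iff2[OF b al] by blast
    ultimately show "\<nu> \<in> {\<nu>. robin_eigenvalue b \<alpha> \<nu> \<and> \<nu> < ?f j}" using n by blast
  qed
  have card: "card {\<nu>. robin_eigenvalue b \<alpha> \<nu> \<and> \<nu> < ?f j} = j" for j
    unfolding S using card_image[OF inj_on_subset[OF inj subset_UNIV]] by simp
  show ?thesis unfolding robin_ev_def
  proof (rule the_equality)
    show "robin_eigenvalue b \<alpha> (?f (k - 1)) \<and>
          card {\<nu>. robin_eigenvalue b \<alpha> \<nu> \<and> \<nu> < ?f (k - 1)} = k - 1"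
      using card eig_iff2[OF b al] by blast
    fix lam assume "robin_eigenvalue b \<alpha> lam \<and> card {\<mu>. robin_eigenvalue b \<alpha> \<mu> \<and> \<mu> < lam} = k - 1"
    then obtain j where "lam = ?f j" "card {\<mu>. robin_eigenvalue b \<alpha> \<mu> \<and> \<mu> < lam} = k - 1"
      using eig_iff2[OF b al] by blast
    then show "lam = ?f (k - 1)" using card[of j] by simp
  qed
qed




lemma pi_sq_bounds: "8 < pi\<^sup>2" "pi\<^sup>2 < 12"
proof -
  have "3 < pi" by (rule pi_gt3)
  then have "3 * 3 < pi * pi" using mult_strict_mono[of 3 pi 3 pi] by simp
  then show "8 < pi\<^sup>2" by (simp add: power2_eq_square)
  have "pi \<le> 31415926535899 / 10 ^ 13" by (rule pi_approx(2))
  then have "pi < 3.2" by simp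
  then have "pi * pi < 3.2 * 3.2" using pi_gt_zero mult_strict_mono[of pi "3.2" pi "3.2"] by linarith
  then show "pi\<^sup>2 < 12" by (simp add: power2_eq_square)
qed

lemma becker_stark:
  fixes x :: real
  assumes x: "0 < x" "x < pi / 2"
  shows "sin x * (pi\<^sup>2 - 4 * x\<^sup>2) \<le> pi\<^sup>2 * x * cos x"
proof (rule ccontr)
  define c where "c = pi\<^sup>2 - 8"
  have c: "0 < c" "c < 4" using pi_sq_bounds by (auto simp: c_def)
  define f where "f y = pi\<^sup>2 * y * cos y - (pi\<^sup>2 - 4 * y\<^sup>2) * sin y" for y
  define p where "p y = 4 * y * cos y - c * sin y" for y
  define q where "q y = (4 - c) * cos y - 4 * y * sin y" for y
  have fd: "(f has_real_derivative (y * p y)) (at y)" for y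
    unfolding f_def p_def c_def
    by (rule derivative_eq_intros refl)+ (simp add: algebra_simps power2_eq_square)
  have pd: "(p has_real_derivative (q y)) (at y)" for y
    unfolding p_def q_def
    by (rule derivative_eq_intros refl)+ (simp add: algebra_simps)
  have qmono: "q z2 \<le> q z1" if "0 \<le> z1" "z1 \<le> z2" "z2 \<le> pi / 2" for z1 z2
  proof -
    have "cos z2 \<le> cos z1" using that by (intro cos_monotone_0_pi_le) auto
    moreover have "sin z1 \<le> sin z2" using that by (intro sin_monotone_2pi_le) auto
    moreover have "0 \<le> sin z1" using that by (intro sin_ge_zero) auto
    ultimately have "z1 * sin z1 \<le> z2 * sin z2" using that by (intro mult_mono) auto
    moreover have "(4 - c) * cos z2 \<le> (4 - c) * cos z1"
      using \<open>cos z2 \<le> cos z1\<close> c by (intro mult_left_mono) auto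
    ultimately show ?thesis unfolding q_def by linarith
  qed
  assume "\<not> sin x * (pi\<^sup>2 - 4 * x\<^sup>2) \<le> pi\<^sup>2 * x * cos x"
  then have fx: "f x < 0" unfolding f_def by (simp add: algebra_simps)
  have f0: "f 0 = 0" by (simp add: f_def)
  have fpi: "f (pi / 2) = 0" by (simp add: f_def power_divide)
  obtain y1 where y1: "0 < y1" "y1 < x" "f x - f 0 = (x - 0) * (y1 * p y1)"
    using MVT2[of 0 x f "\<lambda>y. y * p y"] fd x by blast
  have py1: "p y1 < 0"
  proof -
    have "x * (y1 * p y1) < 0" using y1 fx f0 by simp
    then have "y1 * p y1 < 0" using x by (simp add: mult_less_0_iff)
    then show ?thesis using y1 by (simp add: mult_less_0_iff)
  qed
  obtain y2 where y2: "x < y2" "y2 < pi / 2" "f (pi / 2) - f x = (pi / 2 - x) * (y2 * p y2)"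
    using MVT2[of x "pi / 2" f "\<lambda>y. y * p y"] fd x by blast
  have py2: "p y2 > 0"
  proof -
    have "(pi / 2 - x) * (y2 * p y2) > 0" using y2 fx fpi by simp
    then have "y2 * p y2 > 0" using x by (simp add: zero_less_mult_iff)
    then show ?thesis using y2 x by (simp add: zero_less_mult_iff)
  qed
  have p0: "p 0 = 0" by (simp add: p_def)
  obtain z1 where z1: "0 < z1" "z1 < y1" "p y1 - p 0 = (y1 - 0) * q z1"
    using MVT2[of 0 y1 p q] pd y1 by blast
  have qz1: "q z1 < 0" using z1 py1 p0 y1 by (simp add: mult_less_0_iff)
  obtain z2 where z2: "y1 < z2" "z2 < y2" "p y2 - p y1 = (y2 - y1) * q z2"
    using MVT2[of y1 y2 p q] pd y1 y2 by fastforce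
  have qz2: "q z2 > 0"
  proof -
    have "(y2 - y1) * q z2 > 0" using z2 py1 py2 by simp
    then show ?thesis using z2 by (simp add: zero_less_mult_iff)
  qed
  have "q z2 \<le> q z1" using qmono[of z1 z2] z1 z2 y2 by simp
  then show False using qz1 qz2 by simp
qed




lemma ev_k_bounds:
  assumes L: "L > 0" and al: "\<alpha> > 0" and k: "k \<ge> 1"
  shows "((real k - 1) * pi / L)\<^sup>2 < robin_ev k L \<alpha>" "robin_ev k L \<alpha> < (real k * pi / L)\<^sup>2"
proof -
  let ?m = "rmu (k - 1) L \<alpha>"
  have e: "robin_ev k L \<alpha> = ?m\<^sup>2" by (rule robin_ev_eq[OF L al k])
  have rk: "real (k - 1) = real k - 1" using k by (simp add: of_nat_diff)
  have b1: "(real k - 1) * pi < ?m * L" using rmu_bounds(1)[OF L al, of "k - 1"] rk by simp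
  have b2: "?m * L < real k * pi" using rmu_bounds(2)[OF L al, of "k - 1"] rk by simp
  have "0 \<le> (real k - 1) * pi / L" using k L by simp
  moreover have "(real k - 1) * pi / L < ?m" using b1 L by (simp add: divide_less_eq)
  ultimately show "((real k - 1) * pi / L)\<^sup>2 < robin_ev k L \<alpha>"
    unfolding e by (simp add: power_strict_mono)
  have "0 \<le> ?m" using rmu_prop(1)[OF L al] less_imp_le by blast
  moreover have "?m < real k * pi / L" using b2 L by (simp add: less_divide_eq)
  ultimately show "robin_ev k L \<alpha> < (real k * pi / L)\<^sup>2"
    unfolding e by (simp add: power_strict_mono)
qed

lemma ev1_upper:
  assumes l: "l > 0" and al: "\<alpha> > 0"
  shows "robin_ev 1 l \<alpha> \<le> 2 * \<alpha> / l"
proof -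
  let ?m = "rmu 0 l \<alpha>"
  have e: "robin_ev 1 l \<alpha> = ?m\<^sup>2" using robin_ev_eq[OF l al, of 1] by simp
  have m: "?m > 0" by (rule rmu_prop(1)[OF l al])
  have "?m * l = 2 * arctan (\<alpha> / ?m)" using rmu_eq[OF l al, of 0] by simp
  also have "\<dots> \<le> 2 * (\<alpha> / ?m)" using arctan_le_self[of "\<alpha> / ?m"] m al by simp
  finally have "?m * l * ?m \<le> 2 * \<alpha>" using m by (simp add: field_simps)
  then have "?m\<^sup>2 * l \<le> 2 * \<alpha>" by (simp add: power2_eq_square algebra_simps)
  then show ?thesis unfolding e using l by (simp add: le_divide_eq)
qed

lemma ev1_lower:
  assumes l: "l > 0" and al: "\<alpha> > 0"
  shows "2 * \<alpha> * pi\<^sup>2 / (l * (pi\<^sup>2 + 2 * \<alpha> * l)) \<le> robin_ev 1 l \<alpha>"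
proof -
  define \<mu> where "\<mu> = rmu 0 l \<alpha>"
  have e: "robin_ev 1 l \<alpha> = \<mu>\<^sup>2" using robin_ev_eq[OF l al, of 1] by (simp add: \<mu>_def)
  have m: "\<mu> > 0" unfolding \<mu>_def by (rule rmu_prop(1)[OF l al])
  define x where "x = arctan (\<alpha> / \<mu>)"
  define t where "t = tan x"
  have lx: "l = 2 * x / \<mu>" using rmu_eq[OF l al, of 0] m by (simp add: x_def \<mu>_def field_simps)
  have at: "\<alpha> = \<mu> * t" using m by (simp add: t_def x_def tan_arctan)
  have x: "0 < x" "x < pi / 2" using al m arctan_ubound[of "\<alpha> / \<mu>"] by (auto simp: x_def)
  have cx: "cos x > 0" using x by (intro cos_gt_zero) auto
  have bs: "sin x * (pi\<^sup>2 - 4 * x\<^sup>2) \<le> pi\<^sup>2 * x * cos x" by (rule becker_stark[OF x])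
  have key: "t * (pi\<^sup>2 - 4 * x\<^sup>2) \<le> pi\<^sup>2 * x"
  proof -
    have "t = sin x / cos x" by (simp add: t_def tan_def)
    then have "t * (pi\<^sup>2 - 4 * x\<^sup>2) = (sin x * (pi\<^sup>2 - 4 * x\<^sup>2)) / cos x" by simp
    also have "\<dots> \<le> (pi\<^sup>2 * x * cos x) / cos x" by (rule divide_right_mono[OF bs less_imp_le[OF cx]])
    also have "\<dots> = pi\<^sup>2 * x" using cx by simp
    finally show ?thesis .
  qed
  have t: "t > 0" using at al m by (simp add: zero_less_mult_iff) 
  have den: "l * (pi\<^sup>2 + 2 * \<alpha> * l) > 0" using l al by (simp add: add_pos_pos)
  have "2 * \<alpha> * pi\<^sup>2 = 2 * \<mu> * (t * pi\<^sup>2)" by (simp add: at)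
  also have "\<dots> \<le> 2 * \<mu> * (x * pi\<^sup>2 + 4 * x\<^sup>2 * t)"
    using key m by (intro mult_left_mono) (auto simp: algebra_simps)
  also have "\<dots> = \<mu>\<^sup>2 * (l * (pi\<^sup>2 + 2 * \<alpha> * l))"
    unfolding lx at using m by (simp add: field_simps power2_eq_square)
  finally show ?thesis unfolding e using den by (simp add: divide_le_eq)
qed




lemma rmu_cont:
  assumes al: "\<alpha> > 0" and b0: "b0 > 0"
  shows "isCont (\<lambda>b. rmu n b \<alpha>) b0"
proof -
  define x where "x = rmu n b0 \<alpha>"
  have x: "x > 0" unfolding x_def by (rule rmu_prop(1)[OF b0 al])
  define f where "f z = (real n * pi + 2 * arctan (\<alpha> / z)) / z" for z
  have fx: "f x = b0" using rmu_eq[OF b0 al, of n] x unfolding f_def x_def[symmetric]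
    by (simp add: field_simps)
  have "isCont (\<lambda>b. rmu n b \<alpha>) (f x)"
  proof (rule isCont_inverse_function[where f=f and g="\<lambda>b. rmu n b \<alpha>" and x=x and d="x / 2"])
    show "0 < x / 2" using x by simp
  next
    fix z assume z: "\<bar>z - x\<bar> \<le> x / 2"
    then have zp: "z > 0" using x by linarith
    have "0 < arctan (\<alpha> / z)" using al zp by simp
    then have fz: "f z > 0" unfolding f_def using zp by (intro divide_pos_pos add_nonneg_pos) auto
    have "G (f z) \<alpha> z = real n * pi" unfolding G_def f_def using zp by (simp add: field_simps)
    then show "rmu n (f z) \<alpha> = z" by (rule rmu_unique[OF fz al zp])
  next
    fix z assume z: "\<bar>z - x\<bar> \<le> x / 2"
    then have zp: "z > 0" using x by linarith
    then show "isCont f z" unfolding f_def by (intro continuous_intros) auto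
  qed
  then show ?thesis using fx by simp
qed

lemma robin_sum_eq:
  assumes A: "A > 0" and al: "\<alpha> > 0" and k: "k \<ge> 1" and a: "a > 0"
  shows "robin_sum k A \<alpha> a = (rmu (k - 1) (sqrt A * a) \<alpha>)\<^sup>2 + (rmu 0 (sqrt A / a) \<alpha>)\<^sup>2"
proof -
  have p1: "sqrt A * a > 0" "sqrt A / a > 0" using A a by simp_all
  show ?thesis unfolding robin_sum_def robin_ev_eq[OF p1(1) al k] robin_ev_eq[OF p1(2) al order_refl] by simp
qed

lemma robin_sum_cont:
  assumes A: "A > 0" and al: "\<alpha> > 0" and k: "k \<ge> 1" and a: "a > 0"
  shows "isCont (robin_sum k A \<alpha>) a"
proof -
  let ?g = "\<lambda>a. (rmu (k - 1) (sqrt A * a) \<alpha>)\<^sup>2 + (rmu 0 (sqrt A / a) \<alpha>)\<^sup>2"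
  have ev: "eventually (\<lambda>y. robin_sum k A \<alpha> y = ?g y) (nhds a)"
    using eventually_nhds_in_open[of "{0<..}" a] a robin_sum_eq[OF A al k]
    by (auto elim!: eventually_mono)
  have p1: "sqrt A * a > 0" "sqrt A / a > 0" using A a by simp_all
  have i1: "isCont (\<lambda>a. sqrt A * a) a" by (intro continuous_intros)
  have i2: "isCont (\<lambda>a. sqrt A / a) a" using a by (intro continuous_intros) auto
  have c1: "isCont (\<lambda>a. rmu (k - 1) (sqrt A * a) \<alpha>) a"
    using isCont_o2[OF i1 rmu_cont[OF al p1(1)]] .
  have c2: "isCont (\<lambda>a. rmu 0 (sqrt A / a) \<alpha>) a"
    using isCont_o2[OF i2 rmu_cont[OF al p1(2)]] .
  have "isCont ?g a" using c1 c2 by (intro continuous_intros)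
  then show ?thesis using isCont_cong[OF ev] by blast
qed

lemma ev1_lower_lin:
  assumes A: "A > 0" and al: "\<alpha> > 0" and a: "a > 0" and d: "sqrt A / a \<le> \<delta>"
  shows "2 * \<alpha> * pi\<^sup>2 / (sqrt A * (pi\<^sup>2 + 2 * \<alpha> * \<delta>)) * a \<le> robin_ev 1 (sqrt A / a) \<alpha>"
proof -
  let ?l = "sqrt A / a"
  have l: "?l > 0" using A a by simp
  have "2 * \<alpha> * pi\<^sup>2 / (sqrt A * (pi\<^sup>2 + 2 * \<alpha> * \<delta>)) * a = 2 * \<alpha> * pi\<^sup>2 / (?l * (pi\<^sup>2 + 2 * \<alpha> * \<delta>))"
    using a by (simp add: field_simps)
  also have "\<dots> \<le> 2 * \<alpha> * pi\<^sup>2 / (?l * (pi\<^sup>2 + 2 * \<alpha> * ?l))"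
  proof (rule divide_left_mono)
    show "0 \<le> 2 * \<alpha> * pi\<^sup>2" using al by simp
    have "2 * \<alpha> * ?l \<le> 2 * \<alpha> * \<delta>" using mult_left_mono[OF d, of "2 * \<alpha>"] al by simp
    then have "pi\<^sup>2 + 2 * \<alpha> * ?l \<le> pi\<^sup>2 + 2 * \<alpha> * \<delta>" by simp
    then show "?l * (pi\<^sup>2 + 2 * \<alpha> * ?l) \<le> ?l * (pi\<^sup>2 + 2 * \<alpha> * \<delta>)"
      using mult_left_mono[OF _ less_imp_le[OF l]] by blast
    show "0 < ?l * (pi\<^sup>2 + 2 * \<alpha> * \<delta>) * (?l * (pi\<^sup>2 + 2 * \<alpha> * ?l))"
    proof -
      have "0 < \<delta>" using l d by linarith
      then show ?thesis using l al A a by (intro mult_pos_pos add_pos_nonneg) auto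
    qed
  qed
  also have "\<dots> \<le> robin_ev 1 ?l \<alpha>" by (rule ev1_lower[OF l al])
  finally show ?thesis .
qed

lemma robin_sum_ge1:
  assumes A: "A > 0" and al: "\<alpha> > 0" and k: "k \<ge> 1" and a: "a > 0"
  shows "robin_ev 1 (sqrt A / a) \<alpha> < robin_sum k A \<alpha> a"
        "robin_ev k (sqrt A * a) \<alpha> < robin_sum k A \<alpha> a"
proof -
  have p1: "sqrt A * a > 0" "sqrt A / a > 0" using A a by simp_all
  have "0 < robin_ev k (sqrt A * a) \<alpha>"
    using ev_k_bounds(1)[OF p1(1) al k] zero_le_power2[of "(real k - 1) * pi / (sqrt A * a)"]
    by linarith
  moreover have "0 < robin_ev 1 (sqrt A / a) \<alpha>"
    using ev_k_bounds(1)[OF p1(2) al order_refl] zero_le_power2[of "(real 1 - 1) * pi / (sqrt A / a)"]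
    by linarith
  ultimately show "robin_ev 1 (sqrt A / a) \<alpha> < robin_sum k A \<alpha> a"
        "robin_ev k (sqrt A * a) \<alpha> < robin_sum k A \<alpha> a" unfolding robin_sum_def by simp_all
qed

lemma attain:
  assumes A: "A > 0" and al: "\<alpha> > 0" and k: "k \<ge> 1"
  shows "\<exists>a\<ge>1. \<forall>b\<ge>1. robin_sum k A \<alpha> a \<le> robin_sum k A \<alpha> b"
proof -
  define C where "C = 2 * \<alpha> * pi\<^sup>2 / (sqrt A * (pi\<^sup>2 + 2 * \<alpha> * sqrt A))"
  have C: "C > 0" unfolding C_def using A al by (intro divide_pos_pos mult_pos_pos add_pos_pos) auto
  have low: "C * b < robin_sum k A \<alpha> b" if "b \<ge> 1" for b
  proof -
    have "sqrt A / b \<le> sqrt A" using that A by (simp add: divide_le_eq)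
    then have "C * b \<le> robin_ev 1 (sqrt A / b) \<alpha>"
      using ev1_lower_lin[OF A al, of b "sqrt A"] that unfolding C_def by simp
    then show ?thesis using robin_sum_ge1(1)[OF A al k, of b] that by simp
  qed
  define R where "R = max 1 (robin_sum k A \<alpha> 1 / C)"
  have R1: "R \<ge> 1" "R \<ge> robin_sum k A \<alpha> 1 / C" by (auto simp: R_def)
  have "C * R \<ge> C * (robin_sum k A \<alpha> 1 / C)" using mult_left_mono[OF R1(2) less_imp_le[OF C]] .
  then have R: "R \<ge> 1" "C * R \<ge> robin_sum k A \<alpha> 1" using C R1 by auto
  have "continuous_on {1..R} (robin_sum k A \<alpha>)"
    by (intro continuous_at_imp_continuous_on ballI robin_sum_cont[OF A al k]) auto
  then obtain x where x: "x \<in> {1..R}" "\<forall>y\<in>{1..R}. robin_sum k A \<alpha> x \<le> robin_sum k A \<alpha> y"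
    using continuous_attains_inf[of "{1..R}" "robin_sum k A \<alpha>"] R by auto
  show ?thesis
  proof (intro exI[of _ x] conjI allI impI)
    show "1 \<le> x" using x by simp
    fix y :: real assume y: "1 \<le> y"
    show "robin_sum k A \<alpha> x \<le> robin_sum k A \<alpha> y"
    proof (cases "y \<le> R")
      case True then show ?thesis using x y by simp
    next
      case False
      have "robin_sum k A \<alpha> x \<le> robin_sum k A \<alpha> 1" using x R by simp
      also have "\<dots> \<le> C * R" using R by simp
      also have "\<dots> \<le> C * y" using False C by simp
      also have "\<dots> \<le> robin_sum k A \<alpha> y" using low[OF y] by simp
      finally show ?thesis .
    qed
  qed
qed

lemma Lambda_attain:
  assumes A: "A > 0" and al: "\<alpha> > 0" and k: "k \<ge> 1"
  shows "\<exists>a\<ge>1. Lambda_k1 k A \<alpha> = robin_sum k A \<alpha> a \<and> (\<forall>b\<ge>1. robin_sum k A \<alpha> a \<le> robin_sum k A \<alpha> b)"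
proof -
  obtain a where a: "a \<ge> 1" "\<forall>b\<ge>1. robin_sum k A \<alpha> a \<le> robin_sum k A \<alpha> b"
    using attain[OF A al k] by blast
  have "Lambda_k1 k A \<alpha> = robin_sum k A \<alpha> a"
    unfolding Lambda_k1_def by (rule cInf_eq_minimum) (use a in auto)
  then show ?thesis using a by blast
qed




lemma cube_root_cube: "(x::real) \<ge> 0 \<Longrightarrow> (x powr (1/3)) ^ 3 = x"
proof (cases "x = 0")
  case False
  assume "x \<ge> 0"
  then have "(x powr (1/3)) ^ 3 = x powr (real 3 * (1/3))" using False by (subst powr_power) auto
  also have "\<dots> = x" using False \<open>x \<ge> 0\<close> by simp
  finally show ?thesis .
qed simp

lemma powr23_cube: "(x::real) \<ge> 0 \<Longrightarrow> (x powr (2/3)) ^ 3 = x ^ 2"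
proof (cases "x = 0")
  case False
  assume "x \<ge> 0"
  then have "(x powr (2/3)) ^ 3 = x powr (real 3 * (2/3))" using False by (subst powr_power) auto
  also have "\<dots> = x powr 2" by simp
  also have "\<dots> = x ^ 2" using False \<open>x \<ge> 0\<close> by (simp add: powr_realpow)
  finally show ?thesis .
qed simp

lemma cube_eq: "(x::real) \<ge> 0 \<Longrightarrow> y \<ge> 0 \<Longrightarrow> x ^ 3 = y ^ 3 \<Longrightarrow> x = y"
  using power_eq_imp_eq_base[of x 3 y] by simp

lemma amgm:
  fixes C m a :: real
  assumes C: "C > 0" and m: "m \<ge> 0" and a: "a > 0"
  shows "3 * C * m / 2 \<le> C * m ^ 3 / (2 * a\<^sup>2) + C * a"
proof -
  have "C * m ^ 3 / (2 * a\<^sup>2) + C * a - 3 * C * m / 2 = C / (2 * a\<^sup>2) * ((a - m)\<^sup>2 * (2 * a + m))"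
    using a by (simp add: field_simps power2_eq_square power3_eq_cube)
  also have "\<dots> \<ge> 0" using C a m by (intro mult_nonneg_nonneg) auto
  finally show ?thesis by simp
qed

lemma amgm_eq:
  fixes C m :: real
  assumes m: "m > 0"
  shows "C * m ^ 3 / (2 * m\<^sup>2) + C * m = 3 * C * m / 2"
  using m by (simp add: field_simps power2_eq_square power3_eq_cube)




lemma conj1:
  fixes A \<alpha> :: real
  assumes A: "A > 0" and al: "\<alpha> > 0" and k: "k \<ge> 2"
  shows "3 * pi\<^sup>2 * \<alpha> powr (2/3) / ((pi\<^sup>2 + 2 * sqrt A * \<alpha>) powr (2/3) * A powr (2/3))
                  * (real k - 2) powr (2/3) \<le> Lambda_k1 k A \<alpha>"
proof -
  have k1: "k \<ge> 1" using k by simp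
  obtain a where a: "a \<ge> 1" "Lambda_k1 k A \<alpha> = robin_sum k A \<alpha> a"
    using Lambda_attain[OF A al k1] by blast
  have a0: "a > 0" using a by simp
  define D where "D = pi\<^sup>2 + 2 * sqrt A * \<alpha>"
  have D: "D > 0" using A al by (simp add: D_def add_pos_nonneg)
  define C where "C = 2 * \<alpha> * pi\<^sup>2 / (sqrt A * D)"
  have C: "C > 0" using A al D by (simp add: C_def)
  define P where "P = (real k - 2)\<^sup>2 * pi\<^sup>2 / A"
  have P: "P \<ge> 0" using A by (simp add: P_def)
  define m where "m = (2 * P / C) powr (1/3)"
  have m: "m \<ge> 0" by (simp add: m_def)
  have m3: "m ^ 3 = 2 * P / C" unfolding m_def using P C by (intro cube_root_cube) simp
  have sA: "sqrt A > 0" "(sqrt A)\<^sup>2 = A" using A by simp_all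
  have "((real k - 2) * pi / (sqrt A * a))\<^sup>2 \<le> ((real k - 1) * pi / (sqrt A * a))\<^sup>2"
    using k sA a0 by (intro power_mono divide_right_mono mult_right_mono) auto
  also have "\<dots> < robin_ev k (sqrt A * a) \<alpha>" using ev_k_bounds(1)[OF _ al k1, of "sqrt A * a"] sA a0 by simp
  finally have lk: "P / a\<^sup>2 < robin_ev k (sqrt A * a) \<alpha>"
    using sA a0 by (simp add: P_def power_divide power_mult_distrib)
  have "sqrt A / a \<le> sqrt A" using a sA by (simp add: divide_le_eq)
  then have l1: "C * a \<le> robin_ev 1 (sqrt A / a) \<alpha>"
    using ev1_lower_lin[OF A al a0, of "sqrt A"] unfolding C_def D_def by (simp add: algebra_simps)
  have "3 * C * m / 2 \<le> C * m ^ 3 / (2 * a\<^sup>2) + C * a" by (rule amgm[OF C m a0])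
  also have "C * m ^ 3 / (2 * a\<^sup>2) = P / a\<^sup>2" using C by (simp add: m3)
  also have "P / a\<^sup>2 + C * a \<le> robin_sum k A \<alpha> a" using lk l1 unfolding robin_sum_def by simp
  finally have main: "3 * C * m / 2 \<le> Lambda_k1 k A \<alpha>" using a by simp
  have eq: "3 * pi\<^sup>2 * \<alpha> powr (2/3) / ((pi\<^sup>2 + 2 * sqrt A * \<alpha>) powr (2/3) * A powr (2/3))
                  * (real k - 2) powr (2/3) = 3 * C * m / 2"
  proof (rule cube_eq)
    show "0 \<le> 3 * pi\<^sup>2 * \<alpha> powr (2/3) / ((pi\<^sup>2 + 2 * sqrt A * \<alpha>) powr (2/3) * A powr (2/3))
                  * (real k - 2) powr (2/3)" by simp
    show "0 \<le> 3 * C * m / 2" using C m by simp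
    have "(3 * pi\<^sup>2 * \<alpha> powr (2/3) / ((pi\<^sup>2 + 2 * sqrt A * \<alpha>) powr (2/3) * A powr (2/3))
                  * (real k - 2) powr (2/3)) ^ 3
          = 27 * pi ^ 6 * \<alpha>\<^sup>2 / (D\<^sup>2 * A\<^sup>2) * (real k - 2)\<^sup>2"
      unfolding D_def[symmetric] using al A D k
      by (simp add: power_mult_distrib power_divide powr23_cube)
    also have "\<dots> = (3 * C * m / 2) ^ 3"
    proof -
      have s3: "sqrt A ^ 3 = A * sqrt A" using A by (simp add: power3_eq_cube)
      show ?thesis
        using C D sA al by (simp add: power_mult_distrib power_divide m3 C_def P_def field_simps s3)
          (simp add: power2_eq_square power3_eq_cube)
    qed
    finally show "(3 * pi\<^sup>2 * \<alpha> powr (2/3) / ((pi\<^sup>2 + 2 * sqrt A * \<alpha>) powr (2/3) * A powr (2/3))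
                  * (real k - 2) powr (2/3)) ^ 3 = (3 * C * m / 2) ^ 3" .
  qed
  show ?thesis using main eq by simp
qed




lemma conj2:
  fixes A \<alpha> :: real
  assumes A: "A > 0" and al: "\<alpha> > 0" and k: "k \<ge> 2"
    and cond: "\<alpha> \<le> pi\<^sup>2 * A powr (-1/2) * (real k)\<^sup>2"
  shows "Lambda_k1 k A \<alpha> \<le> 3 * (pi * \<alpha> / A) powr (2/3) * real k powr (2/3)"
proof -
  have k1: "k \<ge> 1" using k by simp
  obtain a where a: "a \<ge> 1" "Lambda_k1 k A \<alpha> = robin_sum k A \<alpha> a"
      "\<forall>b\<ge>1. robin_sum k A \<alpha> a \<le> robin_sum k A \<alpha> b"
    using Lambda_attain[OF A al k1] by blast
  have sA: "sqrt A > 0" "(sqrt A)\<^sup>2 = A" using A by simp_all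
  have s3: "sqrt A ^ 3 = A * sqrt A" using A by (simp add: power3_eq_cube)
  have Ah: "A powr (-1/2) = 1 / sqrt A"
  proof -
    have "A powr (-1/2) = A powr (- (1/2))" by simp
    also have "\<dots> = 1 / A powr (1/2)" by (simp add: powr_minus_divide)
    also have "\<dots> = 1 / sqrt A" using A by (simp add: powr_half_sqrt)
    finally show ?thesis .
  qed
  define C where "C = 2 * \<alpha> / sqrt A"
  have C: "C > 0" using al sA by (simp add: C_def)
  define M where "M = (real k)\<^sup>2 * pi\<^sup>2 / (\<alpha> * sqrt A)"
  have M: "M > 0" using al sA k by (simp add: M_def)
  define m where "m = M powr (1/3)"
  have m3: "m ^ 3 = M" unfolding m_def using M by (intro cube_root_cube) simp
  have m0: "m > 0" using M by (simp add: m_def)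
  have "\<alpha> * sqrt A \<le> pi\<^sup>2 * (real k)\<^sup>2" using cond sA unfolding Ah by (simp add: field_simps)
  then have M1: "M \<ge> 1" using al sA by (simp add: M_def field_simps)
  have m1: "m \<ge> 1"
  proof (rule ccontr)
    assume "\<not> m \<ge> 1"
    then have "m ^ 3 < 1 ^ 3" using m0 by (intro power_strict_mono) auto
    then show False using M1 m3 by simp
  qed
  have sm: "sqrt A * m > 0" "sqrt A / m > 0" using sA m0 by simp_all
  have "robin_sum k A \<alpha> m < (real k * pi / (sqrt A * m))\<^sup>2 + 2 * \<alpha> / (sqrt A / m)"
    unfolding robin_sum_def using ev_k_bounds(2)[OF sm(1) al k1] ev1_upper[OF sm(2) al] by simp
  also have "\<dots> = C * m ^ 3 / (2 * m\<^sup>2) + C * m"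
    using m0 sA al unfolding C_def m3 M_def
    by (simp add: field_simps power2_eq_square power3_eq_cube)
  also have "\<dots> = 3 * C * m / 2" by (rule amgm_eq[OF m0])
  finally have ub: "Lambda_k1 k A \<alpha> \<le> 3 * C * m / 2" using a m1 by force
  have eq: "3 * C * m / 2 = 3 * (pi * \<alpha> / A) powr (2/3) * real k powr (2/3)"
  proof (rule cube_eq)
    show "0 \<le> 3 * C * m / 2" using C m0 by simp
    show "0 \<le> 3 * (pi * \<alpha> / A) powr (2/3) * real k powr (2/3)" by simp
    have "(3 * (pi * \<alpha> / A) powr (2/3) * real k powr (2/3)) ^ 3 = 27 * (pi * \<alpha> / A)\<^sup>2 * (real k)\<^sup>2"
      using al A by (simp add: power_mult_distrib powr23_cube)
    also have "\<dots> = (3 * C * m / 2) ^ 3"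
      using al sA unfolding power_mult_distrib power_divide m3 C_def M_def
      by (simp add: field_simps s3) (simp add: power2_eq_square power3_eq_cube)
    finally show "(3 * C * m / 2) ^ 3 = (3 * (pi * \<alpha> / A) powr (2/3) * real k powr (2/3)) ^ 3" by simp
  qed
  show ?thesis using ub eq by simp
qed




lemma Ah_lemma: "(A::real) > 0 \<Longrightarrow> A powr (-1/2) = 1 / sqrt A"
proof -
  assume A: "A > 0"
  have "A powr (-1/2) = A powr (- (1/2))" by simp
  also have "\<dots> = 1 / A powr (1/2)" by (simp add: powr_minus_divide)
  also have "\<dots> = 1 / sqrt A" using A by (simp add: powr_half_sqrt)
  finally show ?thesis .
qed

lemma ev_cond:
  assumes A: "A > 0"
  shows "eventually (\<lambda>k. 2 \<le> k \<and> \<alpha> \<le> pi\<^sup>2 * A powr (-1/2) * (real k)\<^sup>2) sequentially"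
proof -
  define K where "K = nat \<lceil>\<alpha> * sqrt A / pi\<^sup>2\<rceil> + 2"
  have "2 \<le> k \<and> \<alpha> \<le> pi\<^sup>2 * A powr (-1/2) * (real k)\<^sup>2" if k: "k \<ge> K" for k
  proof
    show "2 \<le> k" using k by (simp add: K_def)
    have "\<alpha> * sqrt A / pi\<^sup>2 \<le> real k" using k unfolding K_def by linarith
    also have "\<dots> \<le> (real k)\<^sup>2" using k by (simp add: power2_eq_square K_def)
    finally have "\<alpha> * sqrt A \<le> pi\<^sup>2 * (real k)\<^sup>2" by (simp add: divide_le_eq mult.commute)
    then show "\<alpha> \<le> pi\<^sup>2 * A powr (-1/2) * (real k)\<^sup>2" using A unfolding Ah_lemma[OF A]
      by (simp add: field_simps)
  qed
  then show ?thesis unfolding eventually_sequentially by blast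
qed

lemma kpow:
  assumes "k > 0"
  shows "real k powr (1/3) > 0" "(real k powr (1/3)) ^ 3 = real k"
        "real k powr (2/3) = (real k powr (1/3))\<^sup>2"
proof -
  show "real k powr (1/3) > 0" using assms by simp
  show "(real k powr (1/3)) ^ 3 = real k" by (rule cube_root_cube) simp
  have "(real k powr (1/3))\<^sup>2 = real k powr (real 2 * (1/3))" using assms by (subst powr_power) auto
  then show "real k powr (2/3) = (real k powr (1/3))\<^sup>2" by simp
qed

definition Uc :: "real \<Rightarrow> real \<Rightarrow> real" where
  "Uc A \<alpha> = 3 * (pi * \<alpha> / A) powr (2/3)"
definition C0 :: "real \<Rightarrow> real \<Rightarrow> real" where
  "C0 A \<alpha> = 2 * \<alpha> * pi\<^sup>2 / (sqrt A * (pi\<^sup>2 + 2 * \<alpha> * sqrt A))"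
definition cc :: "real \<Rightarrow> real \<Rightarrow> real" where
  "cc A \<alpha> = pi / (2 * sqrt (A * Uc A \<alpha>))"
definition cc' :: "real \<Rightarrow> real \<Rightarrow> real" where
  "cc' A \<alpha> = Uc A \<alpha> / C0 A \<alpha>"

lemma conj4_core:
  fixes A \<alpha> :: real
  assumes A: "A > 0" and al: "\<alpha> > 0" and k: "k \<ge> 2"
    and cond: "\<alpha> \<le> pi\<^sup>2 * A powr (-1/2) * (real k)\<^sup>2"
  shows "\<exists>a\<ge>1. Lambda_k1 k A \<alpha> = robin_sum k A \<alpha> a \<and>
               cc A \<alpha> * real k powr (2/3) \<le> a \<and> a \<le> cc' A \<alpha> * real k powr (2/3)"
proof -
  have k1: "k \<ge> 1" using k by simp
  obtain a where a: "a \<ge> 1" "Lambda_k1 k A \<alpha> = robin_sum k A \<alpha> a"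
    using Lambda_attain[OF A al k1] by blast
  have a0: "a > 0" using a by simp
  define s where "s = real k powr (1/3)"
  have s: "s > 0" "s ^ 3 = real k" "real k powr (2/3) = s\<^sup>2" using kpow[of k] k by (auto simp: s_def)
  define U where "U = Uc A \<alpha>"
  have U: "U > 0" using A al by (simp add: U_def Uc_def)
  have sA: "sqrt A > 0" "(sqrt A)\<^sup>2 = A" using A by simp_all
  have ub: "robin_sum k A \<alpha> a \<le> U * s\<^sup>2"
    using conj2[OF A al k cond] a s unfolding U_def Uc_def by simp
  have C0: "C0 A \<alpha> > 0" using A al by (simp add: C0_def add_pos_pos)
  have "sqrt A / a \<le> sqrt A" using a sA by (simp add: divide_le_eq)
  then have "C0 A \<alpha> * a \<le> robin_ev 1 (sqrt A / a) \<alpha>"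
    using ev1_lower_lin[OF A al a0, of "sqrt A"] unfolding C0_def by (simp add: algebra_simps)
  also have "\<dots> < robin_sum k A \<alpha> a" by (rule robin_sum_ge1(1)[OF A al k1 a0])
  finally have "C0 A \<alpha> * a \<le> U * s\<^sup>2" using ub by simp
  then have aup: "a \<le> cc' A \<alpha> * real k powr (2/3)"
    using C0 unfolding cc'_def s(3) U_def by (simp add: field_simps)
  have sAa: "sqrt A * a > 0" using sA a0 by simp
  have "(real k * pi / (2 * (sqrt A * a)))\<^sup>2 \<le> ((real k - 1) * pi / (sqrt A * a))\<^sup>2"
  proof (rule power_mono)
    show "0 \<le> real k * pi / (2 * (sqrt A * a))" using sAa by simp
    have "real k / 2 \<le> real k - 1" using k by simp
    then have "real k / 2 * pi \<le> (real k - 1) * pi" by (simp add: mult_right_mono)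
    then show "real k * pi / (2 * (sqrt A * a)) \<le> (real k - 1) * pi / (sqrt A * a)"
      using sAa by (simp add: divide_right_mono field_simps)
  qed
  also have "\<dots> < robin_ev k (sqrt A * a) \<alpha>" by (rule ev_k_bounds(1)[OF sAa al k1])
  also have "\<dots> < robin_sum k A \<alpha> a" by (rule robin_sum_ge1(2)[OF A al k1 a0])
  finally have "(real k * pi / (2 * (sqrt A * a)))\<^sup>2 < U * s\<^sup>2" using ub by simp
  then have "(s ^ 3)\<^sup>2 * pi\<^sup>2 < 4 * A * U * s\<^sup>2 * a\<^sup>2"
  proof -
    have pos: "A * (4 * a\<^sup>2) > 0" using A a0 by simp
    assume h: "(real k * pi / (2 * (sqrt A * a)))\<^sup>2 < U * s\<^sup>2"
    have "(real k * pi / (2 * (sqrt A * a)))\<^sup>2 = pi\<^sup>2 * (real k)\<^sup>2 / (A * (4 * a\<^sup>2))"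
      using sA by (simp add: power_divide power_mult_distrib algebra_simps)
    then have "pi\<^sup>2 * (real k)\<^sup>2 < U * s\<^sup>2 * (A * (4 * a\<^sup>2))" using h pos by (simp add: divide_less_eq)
    then show ?thesis unfolding s(2) by (simp add: algebra_simps)
  qed
  then have "s\<^sup>2 * (s ^ 4 * pi\<^sup>2) < s\<^sup>2 * (4 * A * U * a\<^sup>2)"
    by (simp add: power2_eq_square power3_eq_cube algebra_simps power4_eq_xxxx)
  then have l1: "s ^ 4 * pi\<^sup>2 < 4 * A * U * a\<^sup>2"
    using mult_less_cancel_left_pos[of "s\<^sup>2" "s ^ 4 * pi\<^sup>2" "4 * A * U * a\<^sup>2"] s(1) by simp
  have cc2: "(cc A \<alpha>)\<^sup>2 = pi\<^sup>2 / (4 * A * U)"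
    using A U unfolding cc_def U_def[symmetric] by (simp add: power_divide power_mult_distrib)
  have "(cc A \<alpha> * s\<^sup>2)\<^sup>2 < a\<^sup>2"
    using l1 A U unfolding power_mult_distrib cc2 by (simp add: field_simps power2_eq_square power4_eq_xxxx)
  then have "cc A \<alpha> * s\<^sup>2 < a" using power2_less_imp_less a0 less_imp_le by blast
  then have alow: "cc A \<alpha> * real k powr (2/3) \<le> a" using s by simp
  show ?thesis using a alow aup by blast
qed




definition Ck :: "real \<Rightarrow> real \<Rightarrow> nat \<Rightarrow> real" where
  "Ck A \<alpha> k = 2 * \<alpha> * pi\<^sup>2 / (sqrt A * (pi\<^sup>2 + 2 * \<alpha> * (sqrt A / cc A \<alpha> * (1 / real k powr (2/3)))))"
definition low :: "real \<Rightarrow> real \<Rightarrow> nat \<Rightarrow> real" where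
  "low A \<alpha> k = 3 / 2 * Ck A \<alpha> k * (2 * pi\<^sup>2 * ((real k - 1) / real k)\<^sup>2 / (A * Ck A \<alpha> k)) powr (1/3)"

lemma cc_pos: "A > 0 \<Longrightarrow> \<alpha> > 0 \<Longrightarrow> cc A \<alpha> > 0"
  by (simp add: cc_def Uc_def)

lemma conj5_lower:
  fixes A \<alpha> :: real
  assumes A: "A > 0" and al: "\<alpha> > 0" and k: "k \<ge> 2"
    and cond: "\<alpha> \<le> pi\<^sup>2 * A powr (-1/2) * (real k)\<^sup>2"
  shows "low A \<alpha> k \<le> Lambda_k1 k A \<alpha> / real k powr (2/3)"
proof -
  have k1: "k \<ge> 1" using k by simp
  obtain a where a: "a \<ge> 1" "Lambda_k1 k A \<alpha> = robin_sum k A \<alpha> a"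
      "cc A \<alpha> * real k powr (2/3) \<le> a"
    using conj4_core[OF A al k cond] by blast
  have a0: "a > 0" using a by simp
  define s where "s = real k powr (1/3)"
  have s: "s > 0" "s ^ 3 = real k" "real k powr (2/3) = s\<^sup>2" using kpow[of k] k by (auto simp: s_def)
  have sA: "sqrt A > 0" "(sqrt A)\<^sup>2 = A" using A by simp_all
  have cc: "cc A \<alpha> > 0" by (rule cc_pos[OF A al])
  define \<delta> where "\<delta> = sqrt A / cc A \<alpha> * (1 / real k powr (2/3))"
  have "sqrt A / a \<le> sqrt A / (cc A \<alpha> * real k powr (2/3))"
    using a(3) sA cc s a0 by (intro divide_left_mono) auto
  then have ld: "sqrt A / a \<le> \<delta>" unfolding \<delta>_def by simp
  define C where "C = Ck A \<alpha> k"
  have C: "C > 0" unfolding C_def Ck_def using A al cc s by (intro divide_pos_pos mult_pos_pos add_pos_nonneg) auto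
  have l1: "C * a \<le> robin_ev 1 (sqrt A / a) \<alpha>"
    using ev1_lower_lin[OF A al a0 ld] unfolding C_def Ck_def \<delta>_def by simp
  define P where "P = (real k - 1)\<^sup>2 * pi\<^sup>2 / A"
  have P: "P \<ge> 0" using A by (simp add: P_def)
  have sAa: "sqrt A * a > 0" using sA a0 by simp
  have lk: "P / a\<^sup>2 < robin_ev k (sqrt A * a) \<alpha>"
    using ev_k_bounds(1)[OF sAa al k1] sA a0 by (simp add: P_def power_divide power_mult_distrib)
  define m where "m = (2 * P / C) powr (1/3)"
  have m: "m \<ge> 0" by (simp add: m_def)
  have m3: "m ^ 3 = 2 * P / C" unfolding m_def using P C by (intro cube_root_cube) simp
  have "3 * C * m / 2 \<le> C * m ^ 3 / (2 * a\<^sup>2) + C * a" by (rule amgm[OF C m a0])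
  also have "C * m ^ 3 / (2 * a\<^sup>2) = P / a\<^sup>2" using C by (simp add: m3)
  also have "P / a\<^sup>2 + C * a \<le> robin_sum k A \<alpha> a" using lk l1 unfolding robin_sum_def by simp
  finally have main: "3 * C * m / 2 \<le> Lambda_k1 k A \<alpha>" using a by simp
  have eq: "low A \<alpha> k * s\<^sup>2 = 3 * C * m / 2"
  proof (rule cube_eq)
    show "0 \<le> low A \<alpha> k * s\<^sup>2" unfolding low_def C_def[symmetric] using C by simp
    show "0 \<le> 3 * C * m / 2" using C m by simp
    have k0: "real k > 0" using k by simp
    define X where "X = 2 * pi\<^sup>2 * ((real k - 1) / real k)\<^sup>2 / (A * C)"
    have X: "X \<ge> 0" using A C by (simp add: X_def)
    have Xr3: "(X powr (1/3)) ^ 3 = X" by (rule cube_root_cube[OF X])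
    have ss: "(s\<^sup>2) ^ 3 = (s ^ 3)\<^sup>2" by (simp add: power2_eq_square power3_eq_cube)
    have "(low A \<alpha> k * s\<^sup>2) ^ 3 = (3 / 2) ^ 3 * C ^ 3 * (X powr (1/3)) ^ 3 * (s\<^sup>2) ^ 3"
      unfolding low_def C_def[symmetric] X_def[symmetric] by (simp add: power_mult_distrib power_divide)
    also have "\<dots> = 27 / 8 * C ^ 3 * (2 * pi\<^sup>2 * ((real k - 1) / real k)\<^sup>2 / (A * C)) * (s ^ 3)\<^sup>2"
      unfolding Xr3 ss by (simp add: X_def power_divide)
    also have "\<dots> = (3 * C * m / 2) ^ 3"
      unfolding s(2) power_mult_distrib power_divide m3 P_def using C A k0
      by (simp add: field_simps)
    finally show "(low A \<alpha> k * s\<^sup>2) ^ 3 = (3 * C * m / 2) ^ 3" .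
  qed
  show ?thesis using main eq s by (simp add: le_divide_eq)
qed




lemma low_lim:
  fixes A \<alpha> :: real
  assumes A: "A > 0" and al: "\<alpha> > 0"
  shows "low A \<alpha> \<longlonglongrightarrow> Uc A \<alpha>"
proof -
  have sA: "sqrt A > 0" "(sqrt A)\<^sup>2 = A" using A by simp_all
  have h1: "(\<lambda>k::nat. 1 / real k powr (2/3)) \<longlonglongrightarrow> 0" by real_asymp
  have h2: "(\<lambda>k::nat. (real k - 1) / real k) \<longlonglongrightarrow> 1" by real_asymp
  define Ci where "Ci = 2 * \<alpha> / sqrt A"
  have Ci: "Ci > 0" using al sA by (simp add: Ci_def)
  have "(\<lambda>k. Ck A \<alpha> k) \<longlonglongrightarrow> 2 * \<alpha> * pi\<^sup>2 / (sqrt A * (pi\<^sup>2 + 2 * \<alpha> * (sqrt A / cc A \<alpha> * 0)))"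
    unfolding Ck_def by (intro tendsto_intros h1) (use A in simp)
  then have hC: "(\<lambda>k. Ck A \<alpha> k) \<longlonglongrightarrow> Ci" by (simp add: Ci_def)
  have hX: "(\<lambda>k. 2 * pi\<^sup>2 * ((real k - 1) / real k)\<^sup>2 / (A * Ck A \<alpha> k)) \<longlonglongrightarrow> 2 * pi\<^sup>2 * 1\<^sup>2 / (A * Ci)"
    by (intro tendsto_intros h2 hC) (use A Ci in simp)
  have hP: "(\<lambda>k. (2 * pi\<^sup>2 * ((real k - 1) / real k)\<^sup>2 / (A * Ck A \<alpha> k)) powr (1/3))
             \<longlonglongrightarrow> (2 * pi\<^sup>2 * 1\<^sup>2 / (A * Ci)) powr (1/3)"
    by (intro tendsto_intros hX) (use A Ci in simp)
  have hL: "low A \<alpha> \<longlonglongrightarrow> 3 / 2 * Ci * (2 * pi\<^sup>2 * 1\<^sup>2 / (A * Ci)) powr (1/3)"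
    unfolding low_def[abs_def] by (intro tendsto_intros hC hP)
  have hL': "low A \<alpha> \<longlonglongrightarrow> 3 / 2 * Ci * (2 * pi\<^sup>2 / (A * Ci)) powr (1/3)"
    using hL by simp
  have eq: "3 / 2 * Ci * (2 * pi\<^sup>2 / (A * Ci)) powr (1/3) = Uc A \<alpha>"
  proof (rule cube_eq)
    show "0 \<le> 3 / 2 * Ci * (2 * pi\<^sup>2 / (A * Ci)) powr (1/3)" using Ci by simp
    show "0 \<le> Uc A \<alpha>" by (simp add: Uc_def)
    have X: "(2 * pi\<^sup>2 / (A * Ci)) \<ge> 0" using A Ci by simp
    have "(3 / 2 * Ci * (2 * pi\<^sup>2 / (A * Ci)) powr (1/3)) ^ 3
          = 27 / 8 * Ci ^ 3 * (2 * pi\<^sup>2 / (A * Ci))"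
      by (simp add: power_mult_distrib power_divide cube_root_cube[OF X])
    also have "\<dots> = 27 * (pi * \<alpha> / A)\<^sup>2"
      using A al sA Ci unfolding Ci_def by (simp add: field_simps power2_eq_square power3_eq_cube)
    also have "\<dots> = (Uc A \<alpha>) ^ 3" unfolding Uc_def using A al
      by (simp add: power_mult_distrib powr23_cube)
    finally show "(3 / 2 * Ci * (2 * pi\<^sup>2 / (A * Ci)) powr (1/3)) ^ 3 = (Uc A \<alpha>) ^ 3" .
  qed
  show ?thesis using hL' eq by simp
qed




theorem lemma6p1:
  fixes A \<alpha> :: real
  assumes "A > 0" and "\<alpha> > 0"
  shows "(\<forall>k\<ge>2. 3 * pi\<^sup>2 * \<alpha> powr (2/3)
                  / ((pi\<^sup>2 + 2 * sqrt A * \<alpha>) powr (2/3) * A powr (2/3))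
                  * (real k - 2) powr (2/3) \<le> Lambda_k1 k A \<alpha>) \<and>
        (\<forall>k\<ge>2. \<alpha> \<le> pi\<^sup>2 * A powr (-1/2) * (real k)\<^sup>2 \<longrightarrow>
                  Lambda_k1 k A \<alpha> \<le> 3 * (pi * \<alpha> / A) powr (2/3) * real k powr (2/3)) \<and>
        (\<forall>k\<ge>2. \<exists>a\<ge>1. Lambda_k1 k A \<alpha> = robin_sum k A \<alpha> a) \<and>
        (\<exists>c c'. 0 < c \<and> c \<le> c' \<and>
           (\<forall>\<^sub>F k in sequentially. \<exists>a\<ge>1. Lambda_k1 k A \<alpha> = robin_sum k A \<alpha> a \<and>
               c * real k powr (2/3) \<le> a \<and> a \<le> c' * real k powr (2/3))) \<and>
        ((\<lambda>k. Lambda_k1 k A \<alpha> / real k powr (2/3)) \<longlonglongrightarrow> 3 * (pi * \<alpha> / A) powr (2/3))"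
proof (intro conjI)
  note A = assms(1) and al = assms(2)
  show "\<forall>k\<ge>2. 3 * pi\<^sup>2 * \<alpha> powr (2/3)
                  / ((pi\<^sup>2 + 2 * sqrt A * \<alpha>) powr (2/3) * A powr (2/3))
                  * (real k - 2) powr (2/3) \<le> Lambda_k1 k A \<alpha>"
    using conj1[OF A al] by blast
  show "\<forall>k\<ge>2. \<alpha> \<le> pi\<^sup>2 * A powr (-1/2) * (real k)\<^sup>2 \<longrightarrow>
                  Lambda_k1 k A \<alpha> \<le> 3 * (pi * \<alpha> / A) powr (2/3) * real k powr (2/3)"
    using conj2[OF A al] by blast
  show "\<forall>k\<ge>2. \<exists>a\<ge>1. Lambda_k1 k A \<alpha> = robin_sum k A \<alpha> a"
  proof (intro allI impI)
    fix k :: nat assume "k \<ge> 2"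
    then show "\<exists>a\<ge>1. Lambda_k1 k A \<alpha> = robin_sum k A \<alpha> a"
      using Lambda_attain[OF A al, of k] by auto
  qed
  have evc: "eventually (\<lambda>k. 2 \<le> k \<and> \<alpha> \<le> pi\<^sup>2 * A powr (-1/2) * (real k)\<^sup>2) sequentially"
    by (rule ev_cond[OF A])
  let ?P = "\<lambda>k. \<exists>a\<ge>1. Lambda_k1 k A \<alpha> = robin_sum k A \<alpha> a \<and>
               cc A \<alpha> * real k powr (2/3) \<le> a \<and> a \<le> cc' A \<alpha> * real k powr (2/3)"
  have ev4: "eventually (\<lambda>k. 2 \<le> k \<and> ?P k) sequentially"
    using evc by (rule eventually_mono) (use conj4_core[OF A al] in blast)
  have ev4': "eventually ?P sequentially" by (rule eventually_mono[OF ev4]) (erule conjunct2)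
  obtain N where N: "\<And>k. k \<ge> N \<Longrightarrow> 2 \<le> k \<and> ?P k" using ev4 unfolding eventually_sequentially by blast
  have "2 \<le> N \<and> ?P N" using N by simp
  then obtain a where "N \<ge> 2" "cc A \<alpha> * real N powr (2/3) \<le> a" "a \<le> cc' A \<alpha> * real N powr (2/3)" by blast
  moreover have "real N powr (2/3) > 0" using \<open>N \<ge> 2\<close> by simp
  ultimately have cc': "cc A \<alpha> \<le> cc' A \<alpha>" by (meson mult_le_cancel_right_pos order_trans)
  show "\<exists>c c'. 0 < c \<and> c \<le> c' \<and>
           (\<forall>\<^sub>F k in sequentially. \<exists>a\<ge>1. Lambda_k1 k A \<alpha> = robin_sum k A \<alpha> a \<and>
               c * real k powr (2/3) \<le> a \<and> a \<le> c' * real k powr (2/3))"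
    using cc_pos[OF A al] cc' ev4' by blast
  have evl: "eventually (\<lambda>k. low A \<alpha> k \<le> Lambda_k1 k A \<alpha> / real k powr (2/3)) sequentially"
    using evc by (rule eventually_mono) (use conj5_lower[OF A al] in blast)
  have evu: "eventually (\<lambda>k. Lambda_k1 k A \<alpha> / real k powr (2/3) \<le> Uc A \<alpha>) sequentially"
    using evc
  proof (rule eventually_mono)
    fix k :: nat assume k: "2 \<le> k \<and> \<alpha> \<le> pi\<^sup>2 * A powr (-1/2) * (real k)\<^sup>2"
    then have "Lambda_k1 k A \<alpha> \<le> Uc A \<alpha> * real k powr (2/3)"
      using conj2[OF A al] unfolding Uc_def by blast
    moreover have "real k powr (2/3) > 0" using k by simp
    ultimately show "Lambda_k1 k A \<alpha> / real k powr (2/3) \<le> Uc A \<alpha>" by (simp add: divide_le_eq)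
  qed
  have "(\<lambda>k. Lambda_k1 k A \<alpha> / real k powr (2/3)) \<longlonglongrightarrow> Uc A \<alpha>"
    by (rule tendsto_sandwich[OF evl evu low_lim[OF A al] tendsto_const])
  then show "(\<lambda>k. Lambda_k1 k A \<alpha> / real k powr (2/3)) \<longlonglongrightarrow> 3 * (pi * \<alpha> / A) powr (2/3)"
    by (simp add: Uc_def)
qed


end
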